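(* Let $G$ be a graph with no proper 1-join, let $u$ be a 1-cutset of $G$, let $C$ be a connected component of $G\setminus\{u\}$, and let $\overline{C}=C\cup\{u\}$ (as an induced subgraph of $G$). Then $\overline{C}$ has no proper 1-join.
   Context: All graphs are finite and simple. A connected graph $G$ has a 1-cutset $u$ if $G\setminus\{u\}$ has at least two connected components. A 1-join of $G$ is a partition of $V(G)$ into sets $X,Y$ with $|X|,|Y|\ge2$ such that there exist nonempty $A\subseteq X$ and $B\subseteq Y$ with $A$ complete to $B$ (all edges present), $X$ anticomplete to $Y\setminus B$ (no edges), and $Y$ anticomplete to $X\setminus A$; it is denoted $(X,Y,A,B)$. A 1-join $(X,Y,A,B)$ is proper if $A$ and $B$ are stable sets of size at least 2. *)

theory Defs
  imports Main
begin

definition graph :: "'a set \<Rightarrow> ('a \<Rightarrow> 'a \<Rightarrow> bool) \<Rightarrow> bool" where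
  "graph V E \<longleftrightarrow> finite V \<and> (\<forall>x y. E x y \<longrightarrow> x \<in> V \<and> y \<in> V)
     \<and> (\<forall>x y. E x y \<longrightarrow> E y x) \<and> (\<forall>x. \<not> E x x)"

definition induced :: "('a \<Rightarrow> 'a \<Rightarrow> bool) \<Rightarrow> 'a set \<Rightarrow> ('a \<Rightarrow> 'a \<Rightarrow> bool)" where
  "induced E S = (\<lambda>x y. E x y \<and> x \<in> S \<and> y \<in> S)"

definition reach :: "'a set \<Rightarrow> ('a \<Rightarrow> 'a \<Rightarrow> bool) \<Rightarrow> 'a \<Rightarrow> 'a \<Rightarrow> bool" where
  "reach S E x y \<longleftrightarrow> x \<in> S \<and> y \<in> S \<and> (induced E S)\<^sup>*\<^sup>* x y"

definition connected_graph :: "'a set \<Rightarrow> ('a \<Rightarrow> 'a \<Rightarrow> bool) \<Rightarrow> bool" where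
  "connected_graph V E \<longleftrightarrow> V \<noteq> {} \<and> (\<forall>x\<in>V. \<forall>y\<in>V. reach V E x y)"

definition component :: "'a set \<Rightarrow> ('a \<Rightarrow> 'a \<Rightarrow> bool) \<Rightarrow> 'a set \<Rightarrow> bool" where
  "component S E C \<longleftrightarrow> (\<exists>x\<in>S. C = {y. reach S E x y})"

definition one_cutset :: "'a set \<Rightarrow> ('a \<Rightarrow> 'a \<Rightarrow> bool) \<Rightarrow> 'a \<Rightarrow> bool" where
  "one_cutset V E u \<longleftrightarrow> connected_graph V E \<and> u \<in> V \<and>
     (\<exists>C1 C2. component (V - {u}) E C1 \<and> component (V - {u}) E C2 \<and> C1 \<noteq> C2)"

definition complete_to :: "('a \<Rightarrow> 'a \<Rightarrow> bool) \<Rightarrow> 'a set \<Rightarrow> 'a set \<Rightarrow> bool" where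
  "complete_to E A B \<longleftrightarrow> (\<forall>a\<in>A. \<forall>b\<in>B. E a b)"

definition anticomplete_to :: "('a \<Rightarrow> 'a \<Rightarrow> bool) \<Rightarrow> 'a set \<Rightarrow> 'a set \<Rightarrow> bool" where
  "anticomplete_to E A B \<longleftrightarrow> (\<forall>a\<in>A. \<forall>b\<in>B. \<not> E a b)"

definition stable :: "('a \<Rightarrow> 'a \<Rightarrow> bool) \<Rightarrow> 'a set \<Rightarrow> bool" where
  "stable E A \<longleftrightarrow> (\<forall>a\<in>A. \<forall>b\<in>A. \<not> E a b)"

definition one_join :: "'a set \<Rightarrow> ('a \<Rightarrow> 'a \<Rightarrow> bool) \<Rightarrow> 'a set \<Rightarrow> 'a set \<Rightarrow> 'a set \<Rightarrow> 'a set \<Rightarrow> bool" where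
  "one_join V E X Y A B \<longleftrightarrow> X \<union> Y = V \<and> X \<inter> Y = {} \<and> card X \<ge> 2 \<and> card Y \<ge> 2 \<and>
     A \<subseteq> X \<and> A \<noteq> {} \<and> B \<subseteq> Y \<and> B \<noteq> {} \<and> complete_to E A B \<and>
     anticomplete_to E X (Y - B) \<and> anticomplete_to E (X - A) Y"

definition proper_one_join :: "'a set \<Rightarrow> ('a \<Rightarrow> 'a \<Rightarrow> bool) \<Rightarrow> 'a set \<Rightarrow> 'a set \<Rightarrow> 'a set \<Rightarrow> 'a set \<Rightarrow> bool" where
  "proper_one_join V E X Y A B \<longleftrightarrow> one_join V E X Y A B \<and>
     stable E A \<and> stable E B \<and> card A \<ge> 2 \<and> card B \<ge> 2"

definition has_proper_one_join :: "'a set \<Rightarrow> ('a \<Rightarrow> 'a \<Rightarrow> bool) \<Rightarrow> bool" where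
  "has_proper_one_join V E \<longleftrightarrow> (\<exists>X Y A B. proper_one_join V E X Y A B)"

end

theory Submission
  imports Defs
begin

lemma ext1:
  assumes g: "graph V E" and CV: "C \<subseteq> V - {u}" and uV: "u \<in> V"
    and ne: "\<forall>c\<in>C. \<forall>d\<in>V - {u} - C. \<not> E c d \<and> \<not> E d c"
    and p: "proper_one_join (C \<union> {u}) (induced E (C \<union> {u})) X Y A B"
    and uX: "u \<in> X"
  shows "proper_one_join V E (X \<union> (V - (C \<union> {u}))) Y A B"
proof -
  have fin: "finite V" using g unfolding graph_def by auto
  from p have j: "one_join (C \<union> {u}) (induced E (C \<union> {u})) X Y A B"
    and st: "stable (induced E (C \<union> {u})) A" "stable (induced E (C \<union> {u})) B"
    and cA: "card A \<ge> 2" and cB: "card B \<ge> 2"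
    unfolding proper_one_join_def by auto
  from j have XY: "X \<union> Y = C \<union> {u}" and dis: "X \<inter> Y = {}" and cX: "card X \<ge> 2"
    and cY: "card Y \<ge> 2" and AX: "A \<subseteq> X" and An: "A \<noteq> {}" and BY: "B \<subseteq> Y"
    and Bn: "B \<noteq> {}" and cAB: "complete_to (induced E (C \<union> {u})) A B"
    and an1: "anticomplete_to (induced E (C \<union> {u})) X (Y - B)"
    and an2: "anticomplete_to (induced E (C \<union> {u})) (X - A) Y"
    unfolding one_join_def by auto
  have an1': "\<not> E a b" if "a \<in> X" "b \<in> Y - B" for a b
    using an1 that XY unfolding anticomplete_to_def induced_def by blast
  have an2': "\<not> E a b" if "a \<in> X - A" "b \<in> Y" for a b
    using an2 that XY unfolding anticomplete_to_def induced_def by blast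
  have cAB': "complete_to E A B" using cAB unfolding complete_to_def induced_def by blast
  have YC: "Y \<subseteq> C" using XY dis uX by blast
  have XC: "X \<subseteq> C \<union> {u}" using XY by blast
  have finX: "finite (X \<union> (V - (C \<union> {u})))"
  proof (rule finite_subset[OF _ fin])
    show "X \<union> (V - (C \<union> {u})) \<subseteq> V" using XC CV uV by blast
  qed
  have "card X \<le> card (X \<union> (V - (C \<union> {u})))" using finX by (simp add: card_mono)
  then have c2: "card (X \<union> (V - (C \<union> {u}))) \<ge> 2" using cX cY by linarith
  have "one_join V E (X \<union> (V - (C \<union> {u}))) Y A B"
    unfolding one_join_def
  proof (intro conjI)
    show "complete_to E A B" by (rule cAB')
    show "anticomplete_to E (X \<union> (V - (C \<union> {u}))) (Y - B)"
      unfolding anticomplete_to_def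
    proof (intro ballI)
      fix a b assume a: "a \<in> X \<union> (V - (C \<union> {u}))" and b: "b \<in> Y - B"
      show "\<not> E a b"
      proof (cases "a \<in> X")
        case True then show ?thesis using an1' b by blast
      next
        case False then have "a \<in> V - {u} - C" using a by blast
        moreover have "b \<in> C" using b YC by blast
        ultimately show ?thesis using ne by blast
      qed
    qed
    show "anticomplete_to E (X \<union> (V - (C \<union> {u})) - A) Y"
      unfolding anticomplete_to_def
    proof (intro ballI)
      fix a b assume a: "a \<in> X \<union> (V - (C \<union> {u})) - A" and b: "b \<in> Y"
      show "\<not> E a b"
      proof (cases "a \<in> X")
        case True then show ?thesis using an2' a b by blast
      next
        case False then have "a \<in> V - {u} - C" using a by blast
        moreover have "b \<in> C" using b YC by blast
        ultimately show ?thesis using ne by blast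
      qed
    qed
  qed (use XY dis cX cY AX An BY Bn c2 XC YC CV uV in auto)
  moreover have "stable E A" "stable E B" using st AX BY XY unfolding stable_def induced_def by blast+
  ultimately show ?thesis using cA cB unfolding proper_one_join_def by blast
qed

lemma ext2:
  assumes g: "graph V E" and CV: "C \<subseteq> V - {u}" and uV: "u \<in> V"
    and ne: "\<forall>c\<in>C. \<forall>d\<in>V - {u} - C. \<not> E c d \<and> \<not> E d c"
    and p: "proper_one_join (C \<union> {u}) (induced E (C \<union> {u})) X Y A B"
    and uY: "u \<in> Y"
  shows "proper_one_join V E X (Y \<union> (V - (C \<union> {u}))) A B"
proof -
  have fin: "finite V" using g unfolding graph_def by auto
  from p have j: "one_join (C \<union> {u}) (induced E (C \<union> {u})) X Y A B"
    and st: "stable (induced E (C \<union> {u})) A" "stable (induced E (C \<union> {u})) B"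
    and cA: "card A \<ge> 2" and cB: "card B \<ge> 2"
    unfolding proper_one_join_def by auto
  from j have XY: "X \<union> Y = C \<union> {u}" and dis: "X \<inter> Y = {}" and cX: "card X \<ge> 2"
    and cY: "card Y \<ge> 2" and AX: "A \<subseteq> X" and An: "A \<noteq> {}" and BY: "B \<subseteq> Y"
    and Bn: "B \<noteq> {}" and cAB: "complete_to (induced E (C \<union> {u})) A B"
    and an1: "anticomplete_to (induced E (C \<union> {u})) X (Y - B)"
    and an2: "anticomplete_to (induced E (C \<union> {u})) (X - A) Y"
    unfolding one_join_def by auto
  have an1': "\<not> E a b" if "a \<in> X" "b \<in> Y - B" for a b
    using an1 that XY unfolding anticomplete_to_def induced_def by blast
  have an2': "\<not> E a b" if "a \<in> X - A" "b \<in> Y" for a b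
    using an2 that XY unfolding anticomplete_to_def induced_def by blast
  have cAB': "complete_to E A B" using cAB unfolding complete_to_def induced_def by blast
  have XC: "X \<subseteq> C" using XY dis uY by blast
  have YC: "Y \<subseteq> C \<union> {u}" using XY by blast
  have finY: "finite (Y \<union> (V - (C \<union> {u})))"
  proof (rule finite_subset[OF _ fin])
    show "Y \<union> (V - (C \<union> {u})) \<subseteq> V" using YC CV uV by blast
  qed
  have "card Y \<le> card (Y \<union> (V - (C \<union> {u})))" using finY by (simp add: card_mono)
  then have c2: "card (Y \<union> (V - (C \<union> {u}))) \<ge> 2" using cX cY by linarith
  have "one_join V E X (Y \<union> (V - (C \<union> {u}))) A B"
    unfolding one_join_def
  proof (intro conjI)
    show "complete_to E A B" by (rule cAB')
    show "anticomplete_to E X (Y \<union> (V - (C \<union> {u})) - B)"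
      unfolding anticomplete_to_def
    proof (intro ballI)
      fix a b assume b: "b \<in> Y \<union> (V - (C \<union> {u})) - B" and a: "a \<in> X"
      show "\<not> E a b"
      proof (cases "b \<in> Y")
        case True then show ?thesis using an1' a b by blast
      next
        case False then have "b \<in> V - {u} - C" using b by blast
        moreover have "a \<in> C" using a XC by blast
        ultimately show ?thesis using ne by blast
      qed
    qed
    show "anticomplete_to E (X - A) (Y \<union> (V - (C \<union> {u})))"
      unfolding anticomplete_to_def
    proof (intro ballI)
      fix a b assume a: "a \<in> X - A" and b: "b \<in> Y \<union> (V - (C \<union> {u}))"
      show "\<not> E a b"
      proof (cases "b \<in> Y")
        case True then show ?thesis using an2' a b by blast
      next
        case False then have "b \<in> V - {u} - C" using b by blast
        moreover have "a \<in> C" using a XC by blast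
        ultimately show ?thesis using ne by blast
      qed
    qed
  qed (use XY dis cX cY AX An BY Bn c2 XC YC CV uV in auto)
  moreover have "stable E A" "stable E B" using st AX BY XY unfolding stable_def induced_def by blast+
  ultimately show ?thesis using cA cB unfolding proper_one_join_def by blast
qed

theorem mainTheorem8:
  fixes V :: "'a set" and E :: "'a \<Rightarrow> 'a \<Rightarrow> bool" and u :: 'a and C :: "'a set"
  assumes "graph V E"
    and "\<not> has_proper_one_join V E"
    and "one_cutset V E u"
    and "component (V - {u}) E C"
  shows "\<not> has_proper_one_join (C \<union> {u}) (induced E (C \<union> {u}))"
proof
  assume h: "has_proper_one_join (C \<union> {u}) (induced E (C \<union> {u}))"
  have uV: "u \<in> V" using assms(3) unfolding one_cutset_def by auto
  obtain x where xS: "x \<in> V - {u}" and Cd: "C = {y. reach (V - {u}) E x y}"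
    using assms(4) unfolding component_def by auto
  have CV: "C \<subseteq> V - {u}" using Cd unfolding reach_def by auto
  have sym: "\<And>a b. E a b \<Longrightarrow> E b a" using assms(1) unfolding graph_def by auto
  have ne1: "\<not> E c d" if "c \<in> C" "d \<in> V - {u} - C" for c d
  proof
    assume e: "E c d"
    have "reach (V - {u}) E x c" using that Cd by auto
    then have "(induced E (V - {u}))\<^sup>*\<^sup>* x c" unfolding reach_def by auto
    moreover have "induced E (V - {u}) c d" using e that CV unfolding induced_def by auto
    ultimately have "(induced E (V - {u}))\<^sup>*\<^sup>* x d" by auto
    then have "d \<in> C" using Cd xS that unfolding reach_def by auto
    then show False using that by auto
  qed
  have ne: "\<forall>c\<in>C. \<forall>d\<in>V - {u} - C. \<not> E c d \<and> \<not> E d c" using ne1 sym by blast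
  obtain X Y A B where p: "proper_one_join (C \<union> {u}) (induced E (C \<union> {u})) X Y A B"
    using h unfolding has_proper_one_join_def by auto
  have "u \<in> X \<or> u \<in> Y" using p unfolding proper_one_join_def one_join_def by auto
  then show False
  proof
    assume "u \<in> X"
    from ext1[OF assms(1) CV uV ne p this] assms(2) show False
      unfolding has_proper_one_join_def by blast
  next
    assume "u \<in> Y"
    from ext2[OF assms(1) CV uV ne p this] assms(2) show False
      unfolding has_proper_one_join_def by blast
  qed
qed

end
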